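(* Let $A$ be an associative ring (not necessarily commutative or unital), $n\ge 2$, $1\le k\le n-1$, and let $\omega\in PBr_n$, viewed as an element of $Br_n(A)$ via $y_i\mapsto y_i^0$. Then there exists $\omega'\in Br_n$ (depending on $k$ and $\omega$ but not on $a$) such that $y_k^a\,\omega = \omega'\,y_k^a$ in $Br_n(A)$ for every $a\in A$. Consequently, for every $k$ and every $a\in A$, the element $y_k^a (y_k^0)^{-1}\in Br_n(A)$ commutes with every element of $PBr_n$.
   Context: $Br_n(A)$ is the group generated by $y_i^a$, $1\le i\le n-1$, $a\in A$, with relations for all $a,b,c\in A$: $y_i^a y_i^0 y_i^b = y_i^0 y_i^0 y_i^{a+b}$; $y_i^a y_j^b = y_j^b y_i^a$ if $|i-j|\ge 2$; $y_i^a y_{i+1}^b y_i^c = y_{i+1}^c y_i^{b+ac} y_{i+1}^a$. The Artin braid group $Br_n$ (generators $y_i$, relations $y_iy_j=y_jy_i$ for $|i-j|\ge 2$, $y_iy_{i+1}y_i=y_{i+1}y_iy_{i+1}$) is identified with the subgroup of $Br_n(A)$ generated by the $y_i^0$ (i.e. with $Br_n(0)$). $PBr_n$ is the pure braid group, the kernel of the surjection $Br_n\to\mathcal S_n$, $y_i\mapsto (i\ i+1)$. *)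

theory Defs
  imports Main
begin

text \<open>Words in the generators of Br_n(A): a letter (i, a, e) stands for y_i^a if e = False
  and for (y_i^a)^{-1} if e = True.  Group elements of Br_n(A) are words modulo the
  congruence brA_eq n generated by free cancellation and the defining relations.\<close>

type_synonym 'a letter = "nat \<times> 'a \<times> bool"

definition valid_idx :: "nat \<Rightarrow> nat \<Rightarrow> bool" where
  "valid_idx n i \<longleftrightarrow> 1 \<le> i \<and> i \<le> n - 1"

definition valid_word :: "nat \<Rightarrow> 'a letter list \<Rightarrow> bool" where
  "valid_word n w \<longleftrightarrow> (\<forall>(i, a, e) \<in> set w. valid_idx n i)"

definition y :: "nat \<Rightarrow> 'a \<Rightarrow> 'a letter" where
  "y i a = (i, a, False)"

definition yinv :: "nat \<Rightarrow> 'a \<Rightarrow> 'a letter" where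
  "yinv i a = (i, a, True)"

definition inv_letter :: "'a letter \<Rightarrow> 'a letter" where
  "inv_letter l = (case l of (i, a, e) \<Rightarrow> (i, a, \<not> e))"

inductive brA_rel :: "nat \<Rightarrow> ('a::ring) letter list \<Rightarrow> 'a letter list \<Rightarrow> bool" for n where
  free: "valid_idx n (fst l) \<Longrightarrow> brA_rel n [l, inv_letter l] []"
| rel1: "valid_idx n i \<Longrightarrow> brA_rel n [y i a, y i 0, y i b] [y i 0, y i 0, y i (a + b)]"
| rel2: "valid_idx n i \<Longrightarrow> valid_idx n j \<Longrightarrow> (i + 2 \<le> j \<or> j + 2 \<le> i) \<Longrightarrow>
           brA_rel n [y i a, y j b] [y j b, y i a]"
| rel3: "valid_idx n i \<Longrightarrow> valid_idx n (i + 1) \<Longrightarrow>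
           brA_rel n [y i a, y (i + 1) b, y i c] [y (i + 1) c, y i (b + a * c), y (i + 1) a]"

inductive brA_eq :: "nat \<Rightarrow> ('a::ring) letter list \<Rightarrow> 'a letter list \<Rightarrow> bool" for n where
  base: "brA_rel n u v \<Longrightarrow> valid_word n p \<Longrightarrow> valid_word n q \<Longrightarrow> brA_eq n (p @ u @ q) (p @ v @ q)"
| refl: "valid_word n w \<Longrightarrow> brA_eq n w w"
| sym: "brA_eq n u v \<Longrightarrow> brA_eq n v u"
| trans: "brA_eq n u v \<Longrightarrow> brA_eq n v w \<Longrightarrow> brA_eq n u w"

text \<open>Artin braid words: (i, e) is y_i if e = False, y_i^{-1} if e = True.\<close>
definition valid_braid_word :: "nat \<Rightarrow> (nat \<times> bool) list \<Rightarrow> bool" where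
  "valid_braid_word n w \<longleftrightarrow> (\<forall>(i, e) \<in> set w. valid_idx n i)"

definition embed_braid :: "(nat \<times> bool) list \<Rightarrow> ('a::ring) letter list" where
  "embed_braid w = map (\<lambda>(i, e). (i, 0, e)) w"

definition transp :: "nat \<Rightarrow> nat \<Rightarrow> nat" where
  "transp i x = (if x = i then i + 1 else if x = i + 1 then i else x)"

definition braid_perm :: "(nat \<times> bool) list \<Rightarrow> nat \<Rightarrow> nat" where
  "braid_perm w = foldr (\<lambda>(i, e) f. transp i \<circ> f) w id"

definition pure_braid_word :: "nat \<Rightarrow> (nat \<times> bool) list \<Rightarrow> bool" where
  "pure_braid_word n w \<longleftrightarrow> valid_braid_word n w \<and> braid_perm w = id"

end

theory Submission
  imports Defs
begin


lemma vw_simps[simp]: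
  "valid_word n []"
  "valid_word n (x#w) = (valid_idx n (fst x) \<and> valid_word n w)"
  "valid_word n (u@v) = (valid_word n u \<and> valid_word n v)"
  by (auto simp: valid_word_def split: prod.splits)

lemma inv_letter_simp[simp]: "inv_letter (i,a,e) = (i,a,\<not>e)"
  by (simp add: inv_letter_def)

lemma rel_valid: "brA_rel n u v \<Longrightarrow> valid_word n u \<and> valid_word n v"
  by (induction rule: brA_rel.induct) (auto simp: y_def inv_letter_def split: prod.splits)

lemma E_valid: "brA_eq n u v \<Longrightarrow> valid_word n u \<and> valid_word n v"
  by (induction rule: brA_eq.induct) (auto dest: rel_valid)

lemma E_cong: "brA_eq n u v \<Longrightarrow> valid_word n l \<Longrightarrow> valid_word n r \<Longrightarrow> brA_eq n (l@u@r) (l@v@r)"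
proof (induction arbitrary: l r rule: brA_eq.induct)
  case (base u v p q)
  then have "brA_eq n ((l@p)@u@(q@r)) ((l@p)@v@(q@r))" by (intro brA_eq.base) auto
  then show ?case by simp
next
  case (refl w) then show ?case by (intro brA_eq.refl) simp
next
  case (sym u v) then show ?case by (blast intro: brA_eq.sym)
next
  case (trans u v w) then show ?case by (blast intro: brA_eq.trans)
qed

lemmas [trans] = brA_eq.trans

definition winv :: "'a letter list \<Rightarrow> 'a letter list" where
  "winv w = rev (map inv_letter w)"

definition cnj :: "'a letter list \<Rightarrow> 'a letter list \<Rightarrow> 'a letter list" where
  "cnj c x = winv c @ x @ c"

lemma winv_simps[simp]: "winv [] = []" "winv (x#w) = winv w @ [inv_letter x]"
  "winv (u@v) = winv v @ winv u" "winv (winv w) = w"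
  "valid_word n (winv w) = valid_word n w"
  by (auto simp: winv_def rev_map[symmetric] valid_word_def inv_letter_def split: prod.splits)
     (simp add: map_idI inv_letter_def split: prod.splits)




context fixes n :: nat begin

abbreviation EE :: "('a::ring) letter list \<Rightarrow> 'a letter list \<Rightarrow> bool" (infix "\<approx>" 50)
  where "u \<approx> v \<equiv> brA_eq n u v"
abbreviation vw where "vw w \<equiv> valid_word n w"
abbreviation cm :: "('a::ring) letter list \<Rightarrow> 'a letter list \<Rightarrow> bool"
  where "cm x w \<equiv> x @ w \<approx> w @ x"

lemma Ev1: "u \<approx> v \<Longrightarrow> vw u" using E_valid by blast
lemma Ev2: "u \<approx> v \<Longrightarrow> vw v" using E_valid by blast
lemma Erefl: "vw u \<Longrightarrow> u \<approx> u" by (rule brA_eq.refl)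
lemma Esym: "u \<approx> v \<Longrightarrow> v \<approx> u" by (rule brA_eq.sym)

lemma Eapp: "u \<approx> v \<Longrightarrow> u' \<approx> v' \<Longrightarrow> u @ u' \<approx> v @ v'"
proof -
  assume a: "u \<approx> v" "u' \<approx> v'"
  have "u @ u' \<approx> v @ u'" using E_cong[OF a(1), of "[]" u'] a Ev1 by auto
  also have "v @ u' \<approx> v @ v'" using E_cong[OF a(2), of v "[]"] a Ev1 Ev2 by auto
  finally show ?thesis .
qed

lemma EL: "u \<approx> v \<Longrightarrow> vw l \<Longrightarrow> l @ u \<approx> l @ v" using Eapp Erefl by blast
lemma ER: "u \<approx> v \<Longrightarrow> vw r \<Longrightarrow> u @ r \<approx> v @ r" using Eapp Erefl by blast

lemma free_cancel: "valid_idx n i \<Longrightarrow> [(i,a,e),(i,a,\<not>e)] \<approx> []"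
  using brA_eq.base[OF brA_rel.free[of n "(i,a,e)"], of "[]" "[]"] by simp

lemma inv_r: "vw w \<Longrightarrow> w @ winv w \<approx> []"
proof (induction w)
  case Nil then show ?case by (simp add: Erefl)
next
  case (Cons x w)
  obtain i a e where x: "x = (i,a,e)" by (cases x) auto
  have vi: "valid_idx n i" using Cons x by simp
  have "(x#w) @ winv (x#w) = [x] @ (w @ winv w) @ [inv_letter x]" by simp
  also have "... \<approx> [x] @ [] @ [inv_letter x]" by (rule E_cong) (use Cons x in auto)
  also have "[x] @ [] @ [inv_letter x] \<approx> []" using free_cancel[OF vi, of a e] x by simp
  finally show ?case .
qed

lemma inv_l: "vw w \<Longrightarrow> winv w @ w \<approx> []"
  using inv_r[of "winv w"] by simp

lemma ins_mid: "vw l \<Longrightarrow> vw r \<Longrightarrow> vw c \<Longrightarrow> l @ r \<approx> l @ c @ winv c @ r"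
  using E_cong[OF Esym[OF inv_r[of c]], of l r] by simp
lemma ins_mid': "vw l \<Longrightarrow> vw r \<Longrightarrow> vw c \<Longrightarrow> l @ r \<approx> l @ winv c @ c @ r"
  using E_cong[OF Esym[OF inv_l[of c]], of l r] by simp
lemma del_mid: "vw l \<Longrightarrow> vw r \<Longrightarrow> vw c \<Longrightarrow> l @ c @ winv c @ r \<approx> l @ r"
  using Esym[OF ins_mid] by blast
lemma del_mid': "vw l \<Longrightarrow> vw r \<Longrightarrow> vw c \<Longrightarrow> l @ winv c @ c @ r \<approx> l @ r"
  using Esym[OF ins_mid'] by blast

lemma winv_E: "c \<approx> c' \<Longrightarrow> winv c \<approx> winv c'"
proof -
  assume a: "c \<approx> c'"
  have v: "vw c" "vw c'" using a Ev1 Ev2 by auto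
  have "winv c = winv c @ []" by simp
  also have "... \<approx> winv c @ c' @ winv c'" using ins_mid[of "winv c" "[]" c'] v by simp
  also have "... \<approx> winv c @ c @ winv c'" by (rule E_cong[OF Esym[OF a]]) (use v in auto)
  also have "... \<approx> winv c'" using del_mid'[of "[]" "winv c'" c] v by simp
  finally show ?thesis .
qed

lemma conj_nil[simp]: "cnj [] x = x" by (simp add: cnj_def)
lemma conj_app: "cnj (c1 @ c2) x = cnj c2 (cnj c1 x)" by (simp add: cnj_def)
lemma conj_cons: "cnj (a # c2) x = cnj c2 (cnj [a] x)" using conj_app[of "[a]" c2 x] by simp
lemma vw_conj[simp]: "vw (cnj c x) = (vw c \<and> vw x)" by (auto simp: cnj_def)

lemma conj_E: "x \<approx> x' \<Longrightarrow> vw c \<Longrightarrow> cnj c x \<approx> cnj c x'"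
  unfolding cnj_def by (rule E_cong) auto

lemma conj_cE: "c \<approx> c' \<Longrightarrow> vw x \<Longrightarrow> cnj c x \<approx> cnj c' x"
  unfolding cnj_def by (intro Eapp winv_E EL) (auto dest: Ev1)

lemma intertw: "x @ c \<approx> c @ z \<Longrightarrow> cnj c x \<approx> z"
proof -
  assume a: "x @ c \<approx> c @ z"
  have v: "vw x" "vw c" "vw z" using Ev1[OF a] Ev2[OF a] by auto
  have "cnj c x = winv c @ (x @ c)" by (simp add: cnj_def)
  also have "... \<approx> winv c @ (c @ z)" by (rule EL[OF a]) (use v in simp)
  also have "... \<approx> z" using del_mid'[of "[]" z c] v by simp
  finally show ?thesis .
qed

lemma intertw': "cnj c x \<approx> z \<Longrightarrow> x @ c \<approx> c @ z"
proof -
  assume a: "cnj c x \<approx> z"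
  have v: "vw x" "vw c" "vw z" using Ev1[OF a] Ev2[OF a] by auto
  have "x @ c \<approx> c @ winv c @ x @ c" using ins_mid[of "[]" "x@c" c] v by simp
  also have "... = c @ cnj c x" by (simp add: cnj_def)
  also have "... \<approx> c @ z" by (rule EL[OF a]) (use v in simp)
  finally show ?thesis .
qed

lemma conj_cm: "cm x c \<Longrightarrow> cnj c x \<approx> x"
  by (rule intertw)

lemma cm_nil: "vw x \<Longrightarrow> cm x []" by (simp add: Erefl)

lemma cm_app2: "cm x w1 \<Longrightarrow> cm x w2 \<Longrightarrow> cm x (w1 @ w2)"
proof -
  assume a: "cm x w1" "cm x w2"
  have v: "vw x" "vw w1" "vw w2" using Ev1[OF a(1)] Ev1[OF a(2)] by auto
  have "x @ w1 @ w2 = (x @ w1) @ w2" by simp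
  also have "... \<approx> (w1 @ x) @ w2" by (rule ER[OF a(1)]) (use v in simp)
  also have "... = w1 @ (x @ w2)" by simp
  also have "... \<approx> w1 @ (w2 @ x)" by (rule EL[OF a(2)]) (use v in simp)
  finally show ?thesis by simp
qed

lemma cm_sym: "cm x w \<Longrightarrow> cm w x" by (rule Esym)

lemma cm_app1: "cm x1 w \<Longrightarrow> cm x2 w \<Longrightarrow> cm (x1 @ x2) w"
  using cm_app2[OF cm_sym cm_sym] cm_sym by blast

lemma cm_winv: "cm x w \<Longrightarrow> cm x (winv w)"
proof -
  assume a: "cm x w"
  have v: "vw x" "vw w" using Ev1[OF a] by auto
  have "x @ winv w \<approx> winv w @ w @ x @ winv w" using ins_mid'[of "[]" "x @ winv w" w] v by simp
  also have "... \<approx> winv w @ x @ w @ winv w" using E_cong[OF Esym[OF a], of "winv w" "winv w"] v by simp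
  also have "... \<approx> winv w @ x" using del_mid[of "winv w @ x" "[]" w] v by simp
  finally show ?thesis .
qed

lemma cm_E2: "cm x w \<Longrightarrow> w \<approx> w' \<Longrightarrow> cm x w'"
proof -
  assume a: "cm x w" "w \<approx> w'"
  have v: "vw x" using Ev1[OF a(1)] by auto
  have "x @ w' \<approx> x @ w" by (rule EL[OF Esym[OF a(2)] v])
  also have "... \<approx> w @ x" by fact
  also have "... \<approx> w' @ x" by (rule ER[OF a(2) v])
  finally show ?thesis .
qed

lemma cm_E1: "cm x w \<Longrightarrow> x \<approx> x' \<Longrightarrow> cm x' w"
  using cm_E2[OF cm_sym] cm_sym by blast

lemma cm_conj: "cm x (c @ w @ winv c) \<Longrightarrow> vw w \<Longrightarrow> cm (cnj c x) w"
proof -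
  assume a: "cm x (c @ w @ winv c)" and vw: "vw w"
  have v: "vw x" "vw c" using Ev1[OF a] by auto
  have "cnj c x @ w = winv c @ x @ c @ w" by (simp add: cnj_def)
  also have "... \<approx> winv c @ x @ (c @ w @ winv c) @ c" using ins_mid'[of "winv c @ x @ c @ w" "[]" c] v vw by simp
  also have "... \<approx> winv c @ (c @ w @ winv c) @ x @ c" using E_cong[OF a, of "winv c" c] v by simp
  also have "... \<approx> w @ winv c @ x @ c" using del_mid'[of "[]" "w @ winv c @ x @ c" c] v vw by simp
  finally show ?thesis by (simp add: cnj_def)
qed

lemma cm_conj_inv: "vw c \<Longrightarrow> cm x w \<Longrightarrow> cm (cnj c x) (cnj c w)"
proof -
  assume c: "vw c" and a: "cm x w"
  have v: "vw x" "vw w" using Ev1[OF a] by auto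
  have "c @ cnj c w @ winv c \<approx> w"
    using del_mid[of "[]" "w @ c @ winv c" c] del_mid[of "w" "[]" c] c v unfolding cnj_def
    by (simp add: brA_eq.trans)
  then show ?thesis using cm_conj[OF cm_E2[OF a Esym]] c v by simp
qed

end



context fixes n :: nat begin

abbreviation sg :: "nat \<Rightarrow> ('a::ring) letter" where "sg i \<equiv> (i, 0, False)"
abbreviation sgi :: "nat \<Rightarrow> ('a::ring) letter" where "sgi i \<equiv> (i, 0, True)"
definition uu :: "nat \<Rightarrow> 'a::ring \<Rightarrow> 'a letter list" where "uu j x = [(j,0,True),(j,x,False)]"

lemma vw_uu[simp]: "vw n (uu j x) = valid_idx n j" by (simp add: uu_def)

lemma rw: "brA_eq n u v \<Longrightarrow> vw n l \<Longrightarrow> vw n r \<Longrightarrow> X = l@u@r \<Longrightarrow> Y = l@v@r \<Longrightarrow> brA_eq n X Y"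
  using E_cong by blast

lemma rel_E: "brA_rel n u v \<Longrightarrow> brA_eq n u v"
  using brA_eq.base[of n u v "[]" "[]"] by simp

lemma R1: "valid_idx n j \<Longrightarrow> brA_eq n [(j,x,False),sg j,sg j] [sg j,sg j,(j,x,False)]"
  using rel_E[OF brA_rel.rel1[of n j x 0]] by (simp add: y_def)
lemma R2: "valid_idx n i \<Longrightarrow> valid_idx n j \<Longrightarrow> i + 2 \<le> j \<or> j + 2 \<le> i \<Longrightarrow>
   brA_eq n [(i,x,False),sg j] [sg j,(i,x,False)]"
  using rel_E[OF brA_rel.rel2[of n i j x 0]] by (simp add: y_def)
lemma R3a: "valid_idx n j \<Longrightarrow> valid_idx n (j+1) \<Longrightarrow>
   brA_eq n [(j,x,False),sg (j+1),sg j] [sg (j+1),sg j,(j+1,x,False)]"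
  using rel_E[OF brA_rel.rel3[of n j x 0 0]] by (simp add: y_def)
lemma R3b: "valid_idx n j \<Longrightarrow> valid_idx n (j+1) \<Longrightarrow>
   brA_eq n [sg j,(j+1,x,False),sg j] [sg (j+1),(j,x,False),sg (j+1)]"
  using rel_E[OF brA_rel.rel3[of n j 0 x 0]] by (simp add: y_def)
lemma R3c: "valid_idx n j \<Longrightarrow> valid_idx n (j+1) \<Longrightarrow>
   brA_eq n [sg j,sg (j+1),(j,x,False)] [(j+1,x,False),sg j,sg (j+1)]"
  using rel_E[OF brA_rel.rel3[of n j 0 0 x]] by (simp add: y_def)

lemma braid: "valid_idx n j \<Longrightarrow> valid_idx n (j+1) \<Longrightarrow>
   brA_eq n [sg j,sg (j+1),sg j] [sg (j+1),sg j,sg (j+1) :: 'a::ring letter]"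
  using R3a[of j 0] by simp

lemma cancel_left: "brA_eq n (l @ x) (l @ z) \<Longrightarrow> brA_eq n x z"
proof -
  assume a: "brA_eq n (l @ x) (l @ z)"
  have v: "vw n l" "vw n x" "vw n z" using Ev1[OF a] Ev2[OF a] by auto
  have "brA_eq n x (winv l @ l @ x)" using ins_mid'[of n "[]" x l] v by simp
  also have "brA_eq n ... (winv l @ l @ z)" by (rule EL[OF a]) (use v in simp)
  also have "brA_eq n ... z" using del_mid'[of n "[]" z l] v by simp
  finally show ?thesis .
qed

lemma flip: "brA_eq n (l @ x) (z @ l) \<Longrightarrow> brA_eq n (x @ winv l) (winv l @ z)"
proof -
  assume a: "brA_eq n (l @ x) (z @ l)"
  have v: "vw n l" "vw n x" "vw n z" using Ev1[OF a] Ev2[OF a] by auto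
  have "brA_eq n (x @ winv l) (winv l @ (l @ x) @ winv l)" using ins_mid'[of n "[]" "x @ winv l" l] v by simp
  also have "brA_eq n ... (winv l @ (z @ l) @ winv l)" by (rule E_cong[OF a]) (use v in simp_all)
  also have "brA_eq n ... (winv l @ z)" using del_mid[of n "winv l @ z" "[]" l] v by simp
  finally show ?thesis .
qed

lemma cm_inv_letter: "cm n w [sg i] \<Longrightarrow> cm n w [sgi i]"
  using cm_winv[of n w "[sg i]"] by simp

lemma cm_far: "valid_idx n i \<Longrightarrow> valid_idx n j \<Longrightarrow> i + 2 \<le> j \<or> j + 2 \<le> i \<Longrightarrow> cm n [(i,x,False)] [sg j]"
  using R2 by simp

lemma cm_far_inv: "valid_idx n i \<Longrightarrow> valid_idx n j \<Longrightarrow> i + 2 \<le> j \<or> j + 2 \<le> i \<Longrightarrow> cm n [sgi i] [sg j]"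
  using cm_sym[OF cm_inv_letter[OF cm_sym[OF cm_far[of i j 0]]]] by simp

lemma L1: "valid_idx n i \<Longrightarrow> valid_idx n j \<Longrightarrow> i + 2 \<le> j \<or> j + 2 \<le> i \<Longrightarrow> cm n (uu j x) [sg i]"
  unfolding uu_def using cm_app1[OF cm_far_inv[of j i] cm_far[of j i x]] by auto

lemma L2: "valid_idx n j \<Longrightarrow> cm n (uu j x) [sg j, sg j]"
proof -
  assume v: "valid_idx n j"
  have "cm n [sg j] [sg j, sg j :: 'a letter]" using v by (simp add: Erefl)
  then have "cm n [sgi j] [sg j, sg j :: 'a letter]" using cm_sym cm_inv_letter by blast
  then show ?thesis unfolding uu_def using cm_app1[of n "[sgi j]" "[sg j,sg j]" "[(j,x,False)]"] R1[OF v, of x] by simp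
qed

end

context fixes n j :: nat assumes vj: "valid_idx n j" and vj1: "valid_idx n (j+1)" begin

lemma vs[simp]: "valid_idx n j" "valid_idx n (Suc j)" using vj vj1 by auto

lemma BR1: "brA_eq n [sgi j, sg (j+1), sg j] [sg (j+1), sg j, sgi (j+1) :: 'a::ring letter]"
proof -
  have "brA_eq n [sgi j, sg (j+1), sg j :: 'a letter] [sgi j, sg (j+1), sg j, sg (j+1), sgi (j+1)]"
    using ins_mid[of n "[sgi j, sg (j+1), sg j :: 'a letter]" "[]" "[sg (j+1)]"] by simp
  also have "brA_eq n ... [sgi j, sg j, sg (j+1), sg j, sgi (j+1)]"
    by (rule rw[OF Esym[OF braid[OF vj vj1]], of "[sgi j]" "[sgi (j+1)]"]) simp_all
  also have "brA_eq n ... [sg (j+1), sg j, sgi (j+1)]"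
    using del_mid'[of n "[]" "[sg (j+1), sg j, sgi (j+1) :: 'a letter]" "[sg j]"] by simp
  finally show ?thesis .
qed

lemma BR2: "brA_eq n [sg j, sg (j+1), sgi j] [sgi (j+1), sg j, sg (j+1) :: 'a::ring letter]"
proof -
  have "brA_eq n [sg j, sg (j+1), sgi j :: 'a letter] [sgi (j+1), sg (j+1), sg j, sg (j+1), sgi j]"
    using ins_mid'[of n "[]" "[sg j, sg (j+1), sgi j :: 'a letter]" "[sg (j+1)]"] by simp
  also have "brA_eq n ... [sgi (j+1), sg j, sg (j+1), sg j, sgi j]"
    by (rule rw[OF Esym[OF braid[OF vj vj1]], of "[sgi (j+1)]" "[sgi j]"]) simp_all
  also have "brA_eq n ... [sgi (j+1), sg j, sg (j+1)]"
    using del_mid[of n "[sgi (j+1), sg j, sg (j+1) :: 'a letter]" "[]" "[sg j]"] by simp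
  finally show ?thesis .
qed

lemma L3: "brA_eq n (uu j x @ [sg (j+1), sg j]) ([sg (j+1), sg j] @ uu (j+1) x)"
proof -
  have "brA_eq n (uu j x @ [sg (j+1), sg j]) [sgi j, sg (j+1), sg j, (j+1,x,False)]"
    unfolding uu_def by (rule rw[OF R3a[OF vj vj1], of "[sgi j]" "[]"]) simp_all
  also have "brA_eq n ... [sg (j+1), sg j, sgi (j+1), (j+1,x,False)]"
    by (rule rw[OF BR1, of "[]" "[(j+1,x,False)]"]) simp_all
  finally show ?thesis unfolding uu_def by simp
qed

lemma L4: "brA_eq n ([sg j, sg (j+1)] @ uu j x) (uu (j+1) x @ [sg j, sg (j+1)])"
proof -
  have "brA_eq n ([sg j, sg (j+1)] @ uu j x) [sgi (j+1), sg j, sg (j+1), (j,x,False)]"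
    unfolding uu_def by (rule rw[OF BR2, of "[]" "[(j,x,False)]"]) simp_all
  also have "brA_eq n ... [sgi (j+1), (j+1,x,False), sg j, sg (j+1)]"
    by (rule rw[OF R3c[OF vj vj1], of "[sgi (j+1)]" "[]"]) simp_all
  finally show ?thesis unfolding uu_def by simp
qed

lemma L3': "brA_eq n (cnj [sg (j+1), sg j] (uu j x)) (uu (j+1) x)"
  by (rule intertw[OF L3])

lemma L4': "brA_eq n (cnj [sgi (j+1), sgi j] (uu j x)) (uu (j+1) x)"
  using intertw[OF flip[OF L4]] by simp

lemma L5: "cm n (uu j x) [sg (j+1), sg (j+1)]"
proof -
  have "brA_eq n ([sg (j+1), sg j] @ [sg (j+1), sg (j+1)] @ uu j x) [sg j, sg (j+1), sg j, sg (j+1), sgi j, (j,x,False)]"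
    unfolding uu_def by (rule rw[OF Esym[OF braid[OF vj vj1]], of "[]" "[sg (j+1), sgi j, (j,x,False)]"]) simp_all
  also have "brA_eq n ... ([sg j, sg (j+1)] @ uu (j+1) x @ [sg j, sg (j+1)])"
    by (rule rw[OF L4, of "[sg j, sg (j+1)]" "[]"]) (simp_all add: uu_def)
  also have "brA_eq n ... [sg j, (j+1,x,False), sg j, sg (j+1)]"
    using del_mid[of n "[sg j]" "[(j+1,x,False), sg j, sg (j+1)]" "[sg (j+1)]"] by (simp add: uu_def)
  also have "brA_eq n ... [sg (j+1), (j,x,False), sg (j+1), sg (j+1)]"
    by (rule rw[OF R3b[OF vj vj1], of "[]" "[sg (j+1)]"]) simp_all
  also have "brA_eq n ... ([sg (j+1), sg j] @ uu j x @ [sg (j+1), sg (j+1)])"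
    using ins_mid[of n "[sg (j+1)]" "[(j,x,False), sg (j+1), sg (j+1)]" "[sg j]"] by (simp add: uu_def)
  finally have "brA_eq n ([sg (j+1), sg j] @ ([sg (j+1), sg (j+1)] @ uu j x)) ([sg (j+1), sg j] @ (uu j x @ [sg (j+1), sg (j+1)]))"
    by simp
  then show ?thesis by (rule Esym[OF cancel_left])
qed

lemma XY: "cm n (uu j x) [sg (j+1), sg j, sg j, sg (j+1)]"
proof -
  have "brA_eq n (uu j x @ [sg (j+1), sg j] @ [sg j, sg (j+1)]) (([sg (j+1), sg j] @ uu (j+1) x) @ [sg j, sg (j+1)])"
    using ER[OF L3, of "[sg j, sg (j+1)]"] by simp
  also have "brA_eq n ... ([sg (j+1), sg j] @ [sg j, sg (j+1)] @ uu j x)"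
    using EL[OF Esym[OF L4], of "[sg (j+1), sg j]"] by simp
  finally show ?thesis by simp
qed

lemma Wid: "brA_eq n [sg j, sg (j+1), sg (j+1), sgi j] [sgi (j+1), sg j, sg j, sg (j+1) :: 'a::ring letter]"
proof -
  have "brA_eq n [sg j, sg (j+1), sg (j+1), sgi j :: 'a letter] [sgi (j+1), sg (j+1), sg j, sg (j+1), sg (j+1), sgi j]"
    using ins_mid'[of n "[]" "[sg j, sg (j+1), sg (j+1), sgi j :: 'a letter]" "[sg (j+1)]"] by simp
  also have "brA_eq n ... [sgi (j+1), sg j, sg (j+1), sg j, sg (j+1), sgi j]"
    by (rule rw[OF Esym[OF braid[OF vj vj1]], of "[sgi (j+1)]" "[sg (j+1), sgi j]"]) simp_all
  also have "brA_eq n ... [sgi (j+1), sg j, sg j, sg (j+1), sg j, sgi j]"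
    by (rule rw[OF Esym[OF braid[OF vj vj1]], of "[sgi (j+1), sg j]" "[sgi j]"]) simp_all
  also have "brA_eq n ... [sgi (j+1), sg j, sg j, sg (j+1)]"
    using del_mid[of n "[sgi (j+1), sg j, sg j, sg (j+1) :: 'a letter]" "[]" "[sg j]"] by simp
  finally show ?thesis .
qed

lemma K: "cm n (uu j x) [sg j, sg (j+1), sg (j+1), sgi j]"
proof -
  have "cm n (uu j x) (winv [sg (j+1), sg (j+1)] @ [sg (j+1), sg j, sg j, sg (j+1)])"
    by (rule cm_app2[OF cm_winv[OF L5] XY])
  moreover have "brA_eq n (winv [sg (j+1), sg (j+1)] @ [sg (j+1), sg j, sg j, sg (j+1)]) [sg j, sg (j+1), sg (j+1), sgi j :: 'a letter]"
  proof -
    have "brA_eq n (winv [sg (j+1), sg (j+1)] @ [sg (j+1), sg j, sg j, sg (j+1)]) [sgi (j+1), sg j, sg j, sg (j+1) :: 'a letter]"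
      using del_mid'[of n "[sgi (j+1)]" "[sg j, sg j, sg (j+1) :: 'a letter]" "[sg (j+1)]"] by simp
    moreover have "brA_eq n [sgi (j+1), sg j, sg j, sg (j+1) :: 'a letter] [sg j, sg (j+1), sg (j+1), sgi j]"
      by (rule Esym[OF Wid])
    ultimately show ?thesis by (rule brA_eq.trans)
  qed
  ultimately show ?thesis by (rule cm_E2)
qed


lemma LA2: "brA_eq n (cnj [sg j] (uu (j+1) x)) (cnj [sg (j+1)] (uu j x))"
proof -
  have c1: "cm n (uu j x) ([sg (j+1), sg j, sg j, sg (j+1)] @ winv [sg (j+1), sg (j+1)])"
    by (rule cm_app2[OF XY cm_winv[OF L5]])
  have "brA_eq n ([sg (j+1), sg j, sg j, sg (j+1)] @ winv [sg (j+1), sg (j+1)]) ([sg (j+1)] @ [sg j, sg j] @ winv [sg (j+1) :: 'a letter])"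
    using del_mid[of n "[sg (j+1), sg j, sg j]" "[sgi (j+1) :: 'a letter]" "[sg (j+1)]"] by simp
  from cm_E2[OF c1 this] have "cm n (cnj [sg (j+1)] (uu j x)) [sg j, sg j]"
    by (rule cm_conj) simp
  then have c2: "brA_eq n (cnj [sg j, sg j] (cnj [sg (j+1)] (uu j x))) (cnj [sg (j+1)] (uu j x))"
    by (rule conj_cm)
  have "brA_eq n (cnj [sg j] (uu (j+1) x)) (cnj [sg j] (cnj [sg (j+1), sg j] (uu j x)))"
    by (rule conj_E[OF Esym[OF L3']]) simp
  also have "cnj [sg j] (cnj [sg (j+1), sg j] (uu j x)) = cnj [sg j, sg j] (cnj [sg (j+1)] (uu j x))"
    by (simp add: cnj_def)
  also note c2
  finally show ?thesis .
qed

lemma LB2: "brA_eq n (cnj [sg (j+1), sg j] (uu (j+1) x)) (cnj [sg j, sg (j+1)] (uu j x))"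
proof -
  have k: "cm n (uu j x) ([sg j, sgi (j+1)] @ [sg (j+1), sg (j+1)] @ winv [sg j, sgi (j+1)])"
  proof -
    have "brA_eq n [sg j, sg (j+1), sg (j+1), sgi j] ([sg j, sgi (j+1)] @ [sg (j+1), sg (j+1)] @ winv [sg j, sgi (j+1) :: 'a letter])"
      using ins_mid'[of n "[sg j]" "[sg (j+1), sg (j+1), sgi j :: 'a letter]" "[sg (j+1)]"] by simp
    then show ?thesis by (rule cm_E2[OF K])
  qed
  have c2: "cm n (cnj [sg j, sgi (j+1)] (uu j x)) [sg (j+1), sg (j+1)]"
    by (rule cm_conj[OF k]) simp
  have e1: "brA_eq n [sgi (j+1), sgi j, sg (j+1), sg j] [sg j, sgi (j+1) :: 'a letter]"
  proof -
    have "brA_eq n [sgi (j+1), sgi j, sg (j+1), sg j] [sgi (j+1), sg (j+1), sg j, sgi (j+1) :: 'a letter]"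
      by (rule rw[OF BR1, of "[sgi (j+1)]" "[]"]) simp_all
    also have "brA_eq n ... [sg j, sgi (j+1)]"
      using del_mid'[of n "[]" "[sg j, sgi (j+1) :: 'a letter]" "[sg (j+1)]"] by simp
    finally show ?thesis .
  qed
  have e2: "brA_eq n [sg j, sgi (j+1), sg (j+1), sg (j+1)] [sg j, sg (j+1) :: 'a letter]"
    using del_mid'[of n "[sg j]" "[sg (j+1) :: 'a letter]" "[sg (j+1)]"] by simp
  have "brA_eq n (cnj [sg (j+1), sg j] (uu (j+1) x)) (cnj [sg (j+1), sg j] (cnj [sgi (j+1), sgi j] (uu j x)))"
    by (rule conj_E[OF Esym[OF L4']]) simp
  also have "... = cnj [sgi (j+1), sgi j, sg (j+1), sg j] (uu j x)" by (simp add: cnj_def)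
  also have "brA_eq n ... (cnj [sg j, sgi (j+1)] (uu j x))" by (rule conj_cE[OF e1]) simp
  also have "brA_eq n ... (cnj [sg (j+1), sg (j+1)] (cnj [sg j, sgi (j+1)] (uu j x)))"
    by (rule Esym[OF conj_cm[OF c2]])
  also have "... = cnj [sg j, sgi (j+1), sg (j+1), sg (j+1)] (uu j x)" by (simp add: cnj_def)
  also have "brA_eq n ... (cnj [sg j, sg (j+1)] (uu j x))" by (rule conj_cE[OF e2]) simp
  finally show ?thesis .
qed

lemma LB4: "brA_eq n (cnj [sg j, sg (j+1), sg j] (uu j x)) (cnj [sg (j+1)] (uu (j+1) x))"
proof -
  have "brA_eq n (cnj [sg j, sg (j+1), sg j] (uu j x)) (cnj [sg (j+1), sg j, sg (j+1)] (uu j x))"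
    by (rule conj_cE[OF braid[OF vj vj1]]) simp
  also have "... = cnj [sg (j+1)] (cnj [sg (j+1), sg j] (uu j x))" by (simp add: cnj_def)
  also have "brA_eq n ... (cnj [sg (j+1)] (uu (j+1) x))" by (rule conj_E[OF L3']) simp
  finally show ?thesis .
qed

lemma B6base: "cm n (cnj [sg j] (uu j x)) [sg (j+1), sg (j+1)]"
  by (rule cm_conj) (use K in simp_all)

end
declare vs[simp del]




definition chain :: "nat \<Rightarrow> nat \<Rightarrow> ('a::ring) letter list" where
  "chain p q = map sg [Suc p..<q]"

lemma chain_empty[simp]: "q \<le> Suc p \<Longrightarrow> chain p q = []"
  by (simp add: chain_def)
lemma chain_snoc: "Suc p \<le> m \<Longrightarrow> chain p (Suc m) = chain p m @ [sg m]"
  by (simp add: chain_def)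
lemma chain_cons: "Suc p < q \<Longrightarrow> chain p q = sg (Suc p) # chain (Suc p) q"
  by (simp add: chain_def upt_conv_Cons)
lemma chain_split: "p < m \<Longrightarrow> m < q \<Longrightarrow> chain p q = chain p m @ [sg m] @ chain m q"
proof -
  assume a: "p < m" "m < q"
  have "[Suc p..<q] = [Suc p..<m] @ [m..<q]"
    using upt_add_eq_append[of "Suc p" m "q - m"] a by simp
  also have "[m..<q] = m # [Suc m..<q]" using a by (simp add: upt_conv_Cons)
  finally show ?thesis by (simp add: chain_def)
qed

lemma vw_chain: "q \<le> n \<Longrightarrow> valid_word n (chain p q)"
  by (auto simp: chain_def valid_word_def valid_idx_def)

lemma cm_chain: "valid_word n x \<Longrightarrow> (\<And>i. Suc p \<le> i \<Longrightarrow> i < q \<Longrightarrow> cm n x [sg i]) \<Longrightarrow> cm n x (chain p q)"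
proof (induction q)
  case 0 then show ?case by (simp add: Erefl)
next
  case (Suc q)
  show ?case
  proof (cases "Suc p \<le> q")
    case True
    show ?thesis unfolding chain_snoc[OF True]
      by (rule cm_app2) (use Suc True in auto)
  next
    case False then show ?thesis using Suc by (simp add: Erefl)
  qed
qed

lemma cm_cnj_far: "cm n c w \<Longrightarrow> cm n u w \<Longrightarrow> cm n (cnj c u) w"
  unfolding cnj_def
  by (intro cm_app1 cm_sym[OF cm_winv[OF cm_sym]]) auto

lemma chain_far: "Suc i \<le> p \<or> q + 1 \<le> i \<Longrightarrow> valid_idx n i \<Longrightarrow> q \<le> n \<Longrightarrow> cm n (chain p q) [sg i]"
  apply (rule cm_sym, rule cm_chain)
   apply (simp add: valid_idx_def)
  apply (rule cm_far)
  by (auto simp: valid_idx_def)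




lemma chain_shift:
  assumes "Suc p \<le> i" "i + 2 \<le> q" "q \<le> n"
  shows "brA_eq n (chain p q @ [sg i]) ([sg (Suc i)] @ chain p q)"
proof -
  have vi: "valid_idx n i" "valid_idx n (Suc i)" using assms by (auto simp: valid_idx_def)
  have vi': "valid_idx n (i+1)" using vi by simp
  have sp: "(chain p q :: 'a letter list) = chain p i @ [sg i, sg (Suc i)] @ chain (Suc i) q"
    using assms by (simp add: chain_split[of p i q] chain_cons[of i q])
  have v1: "vw n (chain p i)" "vw n (chain (Suc i) q)" using assms by (simp_all add: vw_chain)
  have c2: "cm n (chain (Suc i) q) [sg i]" by (rule chain_far) (use assms vi in auto)
  have c1: "cm n (chain p i) [sg (Suc i)]" by (rule chain_far) (use assms vi in auto)
  have "(chain p q @ [sg i] :: 'a letter list) = (chain p i @ [sg i, sg (Suc i)]) @ (chain (Suc i) q @ [sg i])" using sp by simp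
  also have "brA_eq n ... ((chain p i @ [sg i, sg (Suc i)]) @ ([sg i] @ chain (Suc i) q))"
    by (rule EL[OF c2]) (use v1 vi in simp)
  also have "brA_eq n ... (chain p i @ [sg (Suc i), sg i, sg (Suc i)] @ chain (Suc i) q)"
    by (rule rw[OF braid[OF vi(1) vi'], of "chain p i" "chain (Suc i) q"]) (use v1 vi in simp_all)
  also have "... = (chain p i @ [sg (Suc i)]) @ ([sg i, sg (Suc i)] @ chain (Suc i) q)" by simp
  also have "brA_eq n ... (([sg (Suc i)] @ chain p i) @ ([sg i, sg (Suc i)] @ chain (Suc i) q))"
    by (rule ER[OF c1]) (use v1 vi in simp)
  also have "... = [sg (Suc i)] @ chain p q" using sp by simp
  finally show ?thesis .
qed

lemma Wlem:
  assumes vx: "vw n x" and h1: "cm n x [sg (Suc p), sg (Suc p)]"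
    and h2: "\<And>j. p + 2 \<le> j \<Longrightarrow> j \<le> n - 1 \<Longrightarrow> cm n x [sg j]"
  shows "Suc p \<le> m \<Longrightarrow> m \<le> n - 1 \<Longrightarrow> cm n x (chain p m @ [sg m, sg m] @ winv (chain p m))"
proof (induction m)
  case 0 then show ?case by simp
next
  case (Suc m)
  show ?case
  proof (cases "Suc p = Suc m")
    case True then show ?thesis using h1 by simp
  next
    case False
    then have pm: "Suc p \<le> m" using Suc.prems by simp
    have vm: "valid_idx n m" "valid_idx n (m+1)" using Suc.prems pm by (auto simp: valid_idx_def)
    have IH: "cm n x (chain p m @ [sg m, sg m] @ winv (chain p m))" by (rule Suc.IH[OF pm]) (use Suc.prems in simp)
    have vC: "vw n (chain p m)" by (rule vw_chain) (use Suc.prems in simp)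
    have cb: "cm n (chain p m) [sg (Suc m)]" by (rule chain_far) (use Suc.prems vm in simp_all)
    have cB: "cm n (chain p m) [sgi (Suc m)]" by (rule cm_inv_letter[OF cb])
    have cb': "cm n [sg (Suc m)] (winv (chain p m))" by (rule cm_winv[OF cm_sym[OF cb]])
    have "chain p (Suc m) @ [sg (Suc m), sg (Suc m)] @ winv (chain p (Suc m))
        = chain p m @ [sg m, sg (m+1), sg (m+1), sgi m] @ winv (chain p m)"
      by (simp add: chain_snoc[OF pm])
    also have "brA_eq n ... (chain p m @ [sgi (m+1), sg m, sg m, sg (m+1)] @ winv (chain p m))"
      by (rule E_cong[OF Wid[OF vm]]) (use vC in simp_all)
    also have "... = (chain p m @ [sgi (Suc m)]) @ [sg m, sg m] @ ([sg (Suc m)] @ winv (chain p m))"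
      by simp
    also have "brA_eq n ... (([sgi (Suc m)] @ chain p m) @ [sg m, sg m] @ (winv (chain p m) @ [sg (Suc m)]))"
      by (rule Eapp[OF cB Eapp[OF Erefl cb']]) (use vm in simp)
    finally have e: "brA_eq n (chain p (Suc m) @ [sg (Suc m), sg (Suc m)] @ winv (chain p (Suc m)))
        ([sgi (Suc m)] @ (chain p m @ [sg m, sg m] @ winv (chain p m)) @ [sg (Suc m)])" by simp
    have "cm n x ([sgi (Suc m)] @ (chain p m @ [sg m, sg m] @ winv (chain p m)) @ [sg (Suc m)])"
      by (intro cm_app2 IH cm_inv_letter h2) (use Suc.prems pm in simp_all)
    then show ?thesis by (rule cm_E2[OF _ Esym[OF e]])
  qed
qed


definition U :: "'a::ring \<Rightarrow> nat \<Rightarrow> nat \<Rightarrow> 'a letter list" where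
  "U x p q = (if p < q then cnj (chain p q) (uu p x) else cnj (sg q # chain q p) (uu q x))"

lemma cnj_far: "cm n c [sg i] \<Longrightarrow> cm n u [sg i] \<Longrightarrow> brA_eq n (cnj [sg i] (cnj c u)) (cnj c u)"
  by (rule conj_cm[OF cm_cnj_far])

lemma keyA:
  fixes x :: "'a::ring"
  assumes vi: "valid_idx n i" and pq: "1 \<le> p" "p < q" "q \<le> n"
  shows "brA_eq n (cnj [sg i] (U x p q)) (U x (transp i p) (transp i q))"
proof -
  have vp: "valid_idx n p" using pq by (simp add: valid_idx_def)
  have vC: "vw n (chain p q :: 'a letter list)" using pq by (simp add: vw_chain)
  have Uq: "U x p q = cnj (chain p q) (uu p x)" using pq by (simp add: U_def)
  consider (A1) "i + 2 \<le> p" | (A2) "i + 1 = p" | (A3) "i = p" "q = Suc p" | (A4) "i = p" "p + 2 \<le> q"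
    | (A5) "p + 1 \<le> i" "i + 2 \<le> q" | (A6) "i + 1 = q" "p + 2 \<le> q" | (A7) "i = q" | (A8) "q + 1 \<le> i"
    by linarith
  then show ?thesis
  proof cases
    case A1
    have t: "transp i p = p" "transp i q = q" using A1 pq by (auto simp: transp_def)
    have c1: "cm n (chain p q :: 'a letter list) [sg i]" by (rule chain_far) (use A1 vi pq in auto)
    have c2: "cm n (uu p x) [sg i]" by (rule L1) (use A1 vi vp in auto)
    show ?thesis unfolding t Uq by (rule cnj_far[OF c1 c2])
  next
    case A8
    have t: "transp i p = p" "transp i q = q" using A8 pq by (auto simp: transp_def)
    have c1: "cm n (chain p q :: 'a letter list) [sg i]" by (rule chain_far) (use A8 vi pq in auto)
    have c2: "cm n (uu p x) [sg i]" by (rule L1) (use A8 vi vp pq in auto)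
    show ?thesis unfolding t Uq by (rule cnj_far[OF c1 c2])
  next
    case A2
    have t: "transp i p = i" "transp i q = q" using A2 pq by (auto simp: transp_def)
    have vi1: "valid_idx n (i+1)" using A2 vp by simp
    have ch: "chain i q = sg p # (chain p q :: 'a letter list)" using A2 pq chain_cons[of i q] by simp
    have Ut: "U x i q = cnj (chain p q) (cnj [sg p] (uu i x))"
      using A2 pq by (simp add: U_def ch cnj_def)
    have c1: "cm n (chain p q :: 'a letter list) [sg i]" by (rule chain_far) (use A2 vi pq in auto)
    have "cnj [sg i] (U x p q) = cnj (chain p q @ [sg i]) (uu p x)" by (simp add: Uq cnj_def)
    also have "brA_eq n ... (cnj ([sg i] @ chain p q) (uu p x))"
      by (rule conj_cE[OF c1]) (use vp in simp)
    also have "... = cnj (chain p q) (cnj [sg i] (uu (i+1) x))" using A2 by (simp add: cnj_def)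
    also have "brA_eq n ... (cnj (chain p q) (cnj [sg (i+1)] (uu i x)))"
      by (rule conj_E[OF LA2[OF vi vi1]]) (use vC in simp)
    finally show ?thesis unfolding t Ut using A2 by simp
  next
    case A3
    have t: "transp i p = Suc p" "transp i q = p" using A3 by (auto simp: transp_def)
    show ?thesis unfolding t Uq using A3 vp by (simp add: U_def Erefl)
  next
    case A4
    have t: "transp i p = Suc p" "transp i q = q" using A4 by (auto simp: transp_def)
    have vp1: "valid_idx n (p+1)" using A4 pq by (simp add: valid_idx_def)
    have ch: "chain p q = sg (Suc p) # (chain (Suc p) q :: 'a letter list)" using A4 chain_cons[of p q] by simp
    have vC': "vw n (chain (Suc p) q :: 'a letter list)" using pq by (simp add: vw_chain)
    have c1: "cm n (chain (Suc p) q :: 'a letter list) [sg p]" by (rule chain_far) (use vp pq in auto)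
    have "cnj [sg i] (U x p q) = cnj ([sg (Suc p)] @ (chain (Suc p) q @ [sg p])) (uu p x)"
      using A4 by (simp add: Uq ch cnj_def)
    also have "brA_eq n ... (cnj ([sg (Suc p)] @ ([sg p] @ chain (Suc p) q)) (uu p x))"
      by (rule conj_cE[OF EL[OF c1]]) (use vp vp1 in simp_all)
    also have "... = cnj (chain (Suc p) q) (cnj [sg (p+1), sg p] (uu p x))" by (simp add: cnj_def)
    also have "brA_eq n ... (cnj (chain (Suc p) q) (uu (p+1) x))"
      by (rule conj_E[OF L3'[OF vp vp1]]) (use vC' in simp)
    finally show ?thesis unfolding t using A4 by (simp add: U_def)
  next
    case A5
    have t: "transp i p = p" "transp i q = q" using A5 by (auto simp: transp_def)
    have vi1: "valid_idx n (Suc i)" using A5 pq by (simp add: valid_idx_def)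
    have c2: "cm n (uu p x) [sg (Suc i)]" by (rule L1) (use A5 vi1 vp in auto)
    have "cnj [sg i] (U x p q) = cnj (chain p q @ [sg i]) (uu p x)" by (simp add: Uq cnj_def)
    also have "brA_eq n ... (cnj ([sg (Suc i)] @ chain p q) (uu p x))"
      by (rule conj_cE[OF chain_shift]) (use A5 pq vp in simp_all)
    also have "... = cnj (chain p q) (cnj [sg (Suc i)] (uu p x))" by (simp add: cnj_def)
    also have "brA_eq n ... (cnj (chain p q) (uu p x))"
      by (rule conj_E[OF conj_cm[OF c2]]) (use vC in simp)
    finally show ?thesis unfolding t Uq .
  next
    case A6
    have t: "transp i p = p" "transp i q = i" using A6 by (auto simp: transp_def)
    have pi: "Suc p \<le> i" using A6 by simp
    have ch: "chain p q = chain p i @ [sg i :: 'a letter]" using A6 chain_snoc[OF pi] by auto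
    have vp1: "valid_idx n (p+1)" using A6 pq by (simp add: valid_idx_def)
    have W: "cm n (uu p x) (chain p i @ [sg i, sg i] @ winv (chain p i))"
    proof (rule Wlem)
      show "vw n (uu p x)" using vp by simp
      show "cm n (uu p x) [sg (Suc p), sg (Suc p)]" using L5[OF vp vp1] by simp
      show "\<And>j. p + 2 \<le> j \<Longrightarrow> j \<le> n - 1 \<Longrightarrow> cm n (uu p x) [sg j]"
        by (rule L1) (use vp in \<open>auto simp: valid_idx_def\<close>)
      show "Suc p \<le> i" by (rule pi)
      show "i \<le> n - 1" using vi by (simp add: valid_idx_def)
    qed
    have "cnj [sg i] (U x p q) = cnj [sg i, sg i] (cnj (chain p i) (uu p x))" by (simp add: Uq ch cnj_def)
    also have "brA_eq n ... (cnj (chain p i) (uu p x))"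
      by (rule conj_cm[OF cm_conj[OF W]]) (use vi in simp)
    finally show ?thesis unfolding t using A6 by (simp add: U_def)
  next
    case A7
    have t: "transp i p = p" "transp i q = Suc q" using A7 pq by (auto simp: transp_def)
    have "cnj [sg i] (U x p q) = cnj (chain p (Suc q)) (uu p x)"
      using A7 pq by (simp add: Uq cnj_def chain_snoc)
    moreover have "vw n (cnj (chain p (Suc q)) (uu p x))"
    proof -
      have "Suc q \<le> n" using vi A7 unfolding valid_idx_def by arith
      then show ?thesis using vp by (simp add: vw_chain)
    qed
    ultimately show ?thesis unfolding t using pq by (simp add: U_def Erefl)
  qed
qed


lemma keyB:
  fixes x :: "'a::ring"
  assumes vi: "valid_idx n i" and pq: "1 \<le> q" "q < p" "p \<le> n"
  shows "brA_eq n (cnj [sg i] (U x p q)) (U x (transp i p) (transp i q))"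
proof -
  have vq: "valid_idx n q" using pq by (simp add: valid_idx_def)
  have vC: "vw n (chain q p :: 'a letter list)" using pq by (simp add: vw_chain)
  define v where "v = cnj [sg q] (uu q x)"
  have vv: "vw n v" using vq by (simp add: v_def)
  have Uq: "U x p q = cnj (chain q p) v" using pq by (simp add: U_def v_def cnj_def)
  have farv: "cm n v [sg j]" if "valid_idx n j" "q + 2 \<le> j \<or> j + 2 \<le> q" for j
    unfolding v_def by (rule cm_cnj_far[OF cm_far[of n q j 0] L1[of n j q x]]) (use that vq in auto)
  consider (B1) "i + 2 \<le> q" | (B2) "i + 1 = q" | (B3) "i = q" "p = Suc q" | (B4) "i = q" "q + 2 \<le> p"
    | (B5) "q + 1 \<le> i" "i + 2 \<le> p" | (B6) "i + 1 = p" "q + 2 \<le> p" | (B7) "i = p" | (B8) "p + 1 \<le> i"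
    by linarith
  then show ?thesis
  proof cases
    case B1
    have t: "transp i p = p" "transp i q = q" using B1 pq by (auto simp: transp_def)
    have c1: "cm n (chain q p :: 'a letter list) [sg i]" by (rule chain_far) (use B1 vi pq in auto)
    have c2: "cm n v [sg i]" by (rule farv) (use B1 vi in auto)
    show ?thesis unfolding t Uq by (rule cnj_far[OF c1 c2])
  next
    case B8
    have t: "transp i p = p" "transp i q = q" using B8 pq by (auto simp: transp_def)
    have c1: "cm n (chain q p :: 'a letter list) [sg i]" by (rule chain_far) (use B8 vi pq in auto)
    have c2: "cm n v [sg i]" by (rule farv) (use B8 vi pq in auto)
    show ?thesis unfolding t Uq by (rule cnj_far[OF c1 c2])
  next
    case B2
    have t: "transp i p = p" "transp i q = i" using B2 pq by (auto simp: transp_def)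
    have vi1: "valid_idx n (i+1)" using B2 vq by simp
    have ch: "chain i p = sg q # (chain q p :: 'a letter list)" using B2 pq chain_cons[of i p] by simp
    have Ut: "U x p i = cnj (chain q p) (cnj [sg i, sg q] (uu i x))"
      using B2 pq by (simp add: U_def ch cnj_def)
    have c1: "cm n (chain q p :: 'a letter list) [sg i]" by (rule chain_far) (use B2 vi pq in auto)
    have "cnj [sg i] (U x p q) = cnj (chain q p @ [sg i]) v" by (simp add: Uq cnj_def)
    also have "brA_eq n ... (cnj ([sg i] @ chain q p) v)"
      by (rule conj_cE[OF c1]) (use vv in simp)
    also have "... = cnj (chain q p) (cnj [sg (i+1), sg i] (uu (i+1) x))" using B2 by (simp add: cnj_def v_def)
    also have "brA_eq n ... (cnj (chain q p) (cnj [sg i, sg (i+1)] (uu i x)))"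
      by (rule conj_E[OF LB2[OF vi vi1]]) (use vC in simp)
    finally show ?thesis unfolding t Ut using B2 by simp
  next
    case B3
    have t: "transp i p = q" "transp i q = Suc q" using B3 by (auto simp: transp_def)
    have "cnj [sg i] (U x p q) = cnj [sg q, sg q] (uu q x)" unfolding Uq v_def using B3 by (simp add: cnj_def)
    also have "brA_eq n ... (uu q x)" by (rule conj_cm[OF L2[OF vq]])
    finally show ?thesis unfolding t by (simp add: U_def)
  next
    case B4
    have t: "transp i p = p" "transp i q = Suc q" using B4 by (auto simp: transp_def)
    have vq1: "valid_idx n (q+1)" using B4 pq by (simp add: valid_idx_def)
    have ch: "chain q p = sg (Suc q) # (chain (Suc q) p :: 'a letter list)" using B4 chain_cons[of q p] by simp
    have vC': "vw n (chain (Suc q) p :: 'a letter list)" using pq by (simp add: vw_chain)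
    have c1: "cm n (chain (Suc q) p :: 'a letter list) [sg q]" by (rule chain_far) (use vq pq in auto)
    have "cnj [sg i] (U x p q) = cnj ([sg q, sg (Suc q)] @ (chain (Suc q) p @ [sg q])) (uu q x)"
      using B4 by (simp add: Uq ch cnj_def v_def)
    also have "brA_eq n ... (cnj ([sg q, sg (Suc q)] @ ([sg q] @ chain (Suc q) p)) (uu q x))"
      by (rule conj_cE[OF EL[OF c1]]) (use vq vq1 in simp_all)
    also have "... = cnj (chain (Suc q) p) (cnj [sg q, sg (q+1), sg q] (uu q x))" by (simp add: cnj_def)
    also have "brA_eq n ... (cnj (chain (Suc q) p) (cnj [sg (q+1)] (uu (q+1) x)))"
      by (rule conj_E[OF LB4[OF vq vq1]]) (use vC' in simp)
    finally show ?thesis unfolding t using B4 by (simp add: U_def cnj_def)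
  next
    case B5
    have t: "transp i p = p" "transp i q = q" using B5 by (auto simp: transp_def)
    have vi1: "valid_idx n (Suc i)" using B5 pq by (simp add: valid_idx_def)
    have c2: "cm n v [sg (Suc i)]" by (rule farv) (use B5 vi1 in auto)
    have "cnj [sg i] (U x p q) = cnj (chain q p @ [sg i]) v" by (simp add: Uq cnj_def)
    also have "brA_eq n ... (cnj ([sg (Suc i)] @ chain q p) v)"
      by (rule conj_cE[OF chain_shift]) (use B5 pq vv in simp_all)
    also have "... = cnj (chain q p) (cnj [sg (Suc i)] v)" by (simp add: cnj_def)
    also have "brA_eq n ... (cnj (chain q p) v)"
      by (rule conj_E[OF conj_cm[OF c2]]) (use vC in simp)
    finally show ?thesis unfolding t Uq .
  next
    case B6
    have t: "transp i p = i" "transp i q = q" using B6 by (auto simp: transp_def)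
    have qi: "Suc q \<le> i" using B6 by simp
    have ch: "chain q p = chain q i @ [sg i :: 'a letter]" using B6 chain_snoc[OF qi] by auto
    have vq1: "valid_idx n (q+1)" using B6 pq by (simp add: valid_idx_def)
    have W: "cm n v (chain q i @ [sg i, sg i] @ winv (chain q i))"
    proof (rule Wlem)
      show "vw n v" by (rule vv)
      show "cm n v [sg (Suc q), sg (Suc q)]" using B6base[OF vq vq1] by (simp add: v_def)
      show "\<And>j. q + 2 \<le> j \<Longrightarrow> j \<le> n - 1 \<Longrightarrow> cm n v [sg j]"
        by (rule farv) (use vq in \<open>auto simp: valid_idx_def\<close>)
      show "Suc q \<le> i" by (rule qi)
      show "i \<le> n - 1" using vi by (simp add: valid_idx_def)
    qed
    have "cnj [sg i] (U x p q) = cnj [sg i, sg i] (cnj (chain q i) v)" by (simp add: Uq ch cnj_def)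
    also have "brA_eq n ... (cnj (chain q i) v)"
      by (rule conj_cm[OF cm_conj[OF W]]) (use vi in simp)
    finally show ?thesis unfolding t using B6 by (simp add: U_def v_def cnj_def)
  next
    case B7
    have t: "transp i p = Suc p" "transp i q = q" using B7 pq by (auto simp: transp_def)
    have "cnj [sg i] (U x p q) = cnj (chain q (Suc p)) v"
      using B7 pq by (simp add: Uq cnj_def chain_snoc)
    moreover have "vw n (cnj (chain q (Suc p)) v)"
    proof -
      have "Suc p \<le> n" using vi B7 unfolding valid_idx_def by arith
      then show ?thesis using vv by (simp add: vw_chain)
    qed
    ultimately show ?thesis unfolding t using pq by (simp add: U_def v_def cnj_def Erefl)
  qed
qed


lemma transp_inv[simp]: "transp i (transp i p) = p" by (simp add: transp_def)
lemma transp_range: "valid_idx n i \<Longrightarrow> 1 \<le> p \<Longrightarrow> p \<le> n \<Longrightarrow> 1 \<le> transp i p \<and> transp i p \<le> n"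
  by (auto simp: transp_def valid_idx_def)
lemma transp_inj: "transp i p = transp i q \<Longrightarrow> p = q"
  by (metis transp_inv)

lemma key:
  fixes x :: "'a::ring"
  assumes vi: "valid_idx n i" and r: "1 \<le> p" "p \<le> n" "1 \<le> q" "q \<le> n" "p \<noteq> q"
  shows "brA_eq n (cnj [sg i] (U x p q)) (U x (transp i p) (transp i q))"
proof (cases "p < q")
  case True then show ?thesis by (intro keyA[OF vi]) (use r in auto)
next
  case False then show ?thesis by (intro keyB[OF vi]) (use r in auto)
qed

lemma cnj_move: "brA_eq n (cnj c yy) z \<Longrightarrow> brA_eq n yy (cnj (winv c) z)"
proof -
  assume a: "brA_eq n (cnj c yy) z"
  have v: "vw n c" "vw n yy" "vw n z" using Ev1[OF a] Ev2[OF a] by auto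
  have "brA_eq n yy (c @ winv c @ yy @ c @ winv c)"
    using ins_mid[of n "[]" "yy @ c @ winv c" c] ins_mid[of n yy "[]" c] v
    by (simp add: brA_eq.trans)
  also have "... = cnj (winv c) (cnj c yy)" by (simp add: cnj_def)
  also have "brA_eq n ... (cnj (winv c) z)" by (rule conj_E[OF a]) (use v in simp)
  finally show ?thesis .
qed

lemma key_inv:
  fixes x :: "'a::ring"
  assumes vi: "valid_idx n i" and r: "1 \<le> p" "p \<le> n" "1 \<le> q" "q \<le> n" "p \<noteq> q"
  shows "brA_eq n (cnj [sgi i] (U x p q)) (U x (transp i p) (transp i q))"
proof -
  have r': "1 \<le> transp i p" "transp i p \<le> n" "1 \<le> transp i q" "transp i q \<le> n" "transp i p \<noteq> transp i q"
    using transp_range[OF vi] r transp_inj by blast+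
  have "brA_eq n (cnj [sg i] (U x (transp i p) (transp i q))) (U x p q)"
    using key[OF vi r'] by simp
  from cnj_move[OF this] have "brA_eq n (U x (transp i p) (transp i q)) (cnj [sgi i] (U x p q))" by simp
  then show ?thesis by (rule Esym)
qed

lemma braid_perm_append: "braid_perm (u @ v) = braid_perm u \<circ> braid_perm v"
  by (induction u) (auto simp: braid_perm_def)
lemma braid_perm_Nil[simp]: "braid_perm [] = id"
  by (simp add: braid_perm_def)
lemma braid_perm_single: "braid_perm [l] = transp (fst l)"
  by (cases l) (simp add: braid_perm_def)
lemma braid_perm_Cons: "braid_perm (l # w) = transp (fst l) \<circ> braid_perm w"
  by (cases l) (simp add: braid_perm_def)
lemma braid_perm_rev: "braid_perm (rev w) \<circ> braid_perm w = id"
proof (induction w)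
  case Nil then show ?case by (simp add: braid_perm_def)
next
  case (Cons l w)
  have "braid_perm (rev (l # w)) \<circ> braid_perm (l # w) = braid_perm (rev w) \<circ> (transp (fst l) \<circ> transp (fst l)) \<circ> braid_perm w"
    by (simp add: braid_perm_append braid_perm_single braid_perm_Cons comp_assoc)
  also have "transp (fst l) \<circ> transp (fst l) = id" by (rule ext) simp
  finally show ?case using Cons by (simp add: comp_assoc)
qed

lemma vw_embed: "valid_braid_word n w \<Longrightarrow> vw n (embed_braid w :: 'a::ring letter list)"
  by (auto simp: valid_braid_word_def valid_word_def embed_braid_def)

lemma transport:
  fixes x :: "'a::ring"
  shows "valid_braid_word n w \<Longrightarrow> 1 \<le> p \<Longrightarrow> p \<le> n \<Longrightarrow> 1 \<le> q \<Longrightarrow> q \<le> n \<Longrightarrow> p \<noteq> q \<Longrightarrow>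
    brA_eq n (cnj (embed_braid w) (U x p q)) (U x (braid_perm (rev w) p) (braid_perm (rev w) q))"
proof (induction w arbitrary: p q)
  case Nil
  have "vw n (U x p q)" using Nil by (auto simp: U_def vw_chain valid_idx_def)
  then show ?case by (simp add: embed_braid_def braid_perm_def Erefl)
next
  case (Cons l w)
  obtain i e where l: "l = (i, e)" by (cases l)
  have vi: "valid_idx n i" using Cons.prems l by (simp add: valid_braid_word_def)
  have vw': "valid_braid_word n w" using Cons.prems by (simp add: valid_braid_word_def)
  have r': "1 \<le> transp i p" "transp i p \<le> n" "1 \<le> transp i q" "transp i q \<le> n" "transp i p \<noteq> transp i q"
    using transp_range[OF vi] Cons.prems transp_inj by blast+
  have step: "brA_eq n (cnj [(i, 0, e)] (U x p q)) (U x (transp i p) (transp i q))"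
    using key[OF vi] key_inv[OF vi] Cons.prems by (cases e) auto
  have "cnj (embed_braid (l # w)) (U x p q) = cnj (embed_braid w) (cnj [(i, 0, e)] (U x p q))"
    by (simp add: l embed_braid_def cnj_def)
  also have "brA_eq n ... (cnj (embed_braid w) (U x (transp i p) (transp i q)))"
    by (rule conj_E[OF step vw_embed[OF vw']])
  also have "brA_eq n ... (U x (braid_perm (rev w) (transp i p)) (braid_perm (rev w) (transp i q)))"
    by (rule Cons.IH[OF vw' r'])
  also have "... = U x (braid_perm (rev (l # w)) p) (braid_perm (rev (l # w)) q)"
    by (simp add: l braid_perm_append braid_perm_single)
  finally show ?case .
qed

lemma pure_comm:
  fixes x :: "'a::ring"
  assumes vk: "valid_idx n k" and pw: "pure_braid_word n w"
  shows "cm n (uu k x) (embed_braid w)"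
proof -
  have vb: "valid_braid_word n w" and bp: "braid_perm w = id" using pw by (auto simp: pure_braid_word_def)
  have br: "braid_perm (rev w) = id" using braid_perm_rev[of w] bp by simp
  have r: "1 \<le> k" "k \<le> n" "1 \<le> Suc k" "Suc k \<le> n" "k \<noteq> Suc k" using vk by (auto simp: valid_idx_def)
  have "brA_eq n (cnj (embed_braid w) (U x k (Suc k))) (U x k (Suc k))"
    using transport[OF vb r] br by simp
  then have "brA_eq n (cnj (embed_braid w) (uu k x)) (uu k x)" by (simp add: U_def)
  from intertw'[OF this] show ?thesis .
qed




theorem lemma2p3:
  fixes n k :: nat and w :: "(nat \<times> bool) list"
  assumes "n \<ge> 2" and "1 \<le> k" and "k \<le> n - 1" and "pure_braid_word n w"
  shows "(\<exists>w'. valid_braid_word n w' \<and>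
            (\<forall>a::'a::ring. brA_eq n (y k a # embed_braid w) (embed_braid w' @ [y k a])))
       \<and> (\<forall>a::'a::ring. brA_eq n ([y k a, yinv k 0] @ embed_braid w)
                                   (embed_braid w @ [y k a, yinv k 0]))"
proof
  have vk: "valid_idx n k" using assms by (simp add: valid_idx_def)
  have vb: "valid_braid_word n w" using assms(4) by (simp add: pure_braid_word_def)
  have ve: "vw n (embed_braid w :: 'a letter list)" by (rule vw_embed[OF vb])
  show "\<exists>w'. valid_braid_word n w' \<and>
            (\<forall>a::'a::ring. brA_eq n (y k a # embed_braid w) (embed_braid w' @ [y k a]))"
  proof (intro exI conjI allI)
    show "valid_braid_word n ((k,False) # w @ [(k,True)])" using vb vk by (simp add: valid_braid_word_def)
    fix a :: 'a
    have c: "cm n (uu k a) (embed_braid w)" by (rule pure_comm[OF vk assms(4)])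
    have "embed_braid ((k,False) # w @ [(k,True)]) @ [y k a] = [sg k] @ (embed_braid w @ uu k a)"
      by (simp add: embed_braid_def y_def uu_def)
    also have "brA_eq n ... ([sg k] @ (uu k a @ embed_braid w))" by (rule EL[OF Esym[OF c]]) (use vk in simp)
    also have "... = [] @ [sg k] @ winv [sg k] @ ([(k,a,False)] @ embed_braid w)" by (simp add: uu_def)
    also have "brA_eq n ... ([] @ [(k,a,False)] @ embed_braid w)"
      by (rule del_mid) (use vk ve in simp_all)
    finally show "brA_eq n (y k a # embed_braid w) (embed_braid ((k,False) # w @ [(k,True)]) @ [y k a])"
      by (simp add: y_def Esym)
  qed
  show "\<forall>a::'a::ring. brA_eq n ([y k a, yinv k 0] @ embed_braid w) (embed_braid w @ [y k a, yinv k 0])"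
  proof
    fix a :: 'a
    let ?w2 = "(k,True) # w @ [(k,False)]"
    have p2: "pure_braid_word n ?w2"
    proof -
      have "valid_braid_word n ?w2" using vb vk by (simp add: valid_braid_word_def)
      moreover have "braid_perm ?w2 = id"
        using assms(4) by (auto simp: pure_braid_word_def braid_perm_Cons braid_perm_append braid_perm_single)
      ultimately show ?thesis by (simp add: pure_braid_word_def)
    qed
    have c2: "cm n (uu k a) (embed_braid ?w2)" by (rule pure_comm[OF vk p2])
    have c3: "cm n (cnj [sgi k] (uu k a)) (cnj [sgi k] (embed_braid ?w2))"
      by (rule cm_conj_inv[OF _ c2]) (use vk in simp)
    have e1: "brA_eq n (cnj [sgi k] (uu k a)) [(k,a,False), sgi k]"
    proof -
      have "cnj [sgi k] (uu k a) = [] @ [sg k] @ winv [sg k] @ [(k,a,False), sgi k]" by (simp add: uu_def cnj_def)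
      also have "brA_eq n ... ([] @ [(k,a,False), sgi k])" by (rule del_mid) (use vk in simp_all)
      finally show ?thesis by simp
    qed
    have e2: "brA_eq n (cnj [sgi k] (embed_braid ?w2)) (embed_braid w :: 'a letter list)"
    proof -
      have "cnj [sgi k] (embed_braid ?w2) = ([] :: 'a letter list) @ [sg k] @ winv [sg k] @ (embed_braid w @ [sg k, sgi k])"
        by (simp add: embed_braid_def cnj_def)
      also have "brA_eq n ... ([] @ (embed_braid w @ [sg k, sgi k]))" by (rule del_mid) (use vk ve in simp_all)
      also have "... = embed_braid w @ [sg k] @ winv [sg k] @ []" by simp
      also have "brA_eq n ... (embed_braid w @ [])" by (rule del_mid) (use vk ve in simp_all)
      finally show ?thesis by simp
    qed
    have "cm n [(k,a,False), sgi k] (embed_braid w)" by (rule cm_E2[OF cm_E1[OF c3 e1] e2])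
    then show "brA_eq n ([y k a, yinv k 0] @ embed_braid w) (embed_braid w @ [y k a, yinv k 0])"
      by (simp add: y_def yinv_def)
  qed
qed


end
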